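(* Let $d\geq 2$ be an integer and let $V_d$ be the flip operator on $\mathbb{C}^d\otimes\mathbb{C}^d$, i.e. the linear operator with $V_d(\psi_1\otimes\psi_2)=\psi_2\otimes\psi_1$ for all $\psi_1,\psi_2\in\mathbb{C}^d$. Let $$\rho_d^{(w)}=\frac{1}{d^3}I_{\mathbb{C}^d\otimes\mathbb{C}^d}+\frac{2}{d^2}P_d^{(-)}=\frac{d+1}{d^3}I_{\mathbb{C}^d\otimes\mathbb{C}^d}-\frac{1}{d^2}V_d,\qquad P_d^{(-)}=\tfrac12\big(I_{\mathbb{C}^d\otimes\mathbb{C}^d}-V_d\big),$$ be the Werner state on $\mathbb{C}^d\otimes\mathbb{C}^d$. Then $\rho_d^{(w)}$ is a density source-operator state, i.e. there exists a density operator $T$ (positive semidefinite, trace one) on $\mathbb{C}^d\otimes\mathbb{C}^d\otimes\mathbb{C}^d$ such that $$\mathrm{tr}^{(2)}_{\mathbb{C}^d}[T]=\mathrm{tr}^{(3)}_{\mathbb{C}^d}[T]=\rho_d^{(w)}.$$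
   Context: For an operator $T$ on $\mathbb{C}^d\otimes\mathbb{C}^d\otimes\mathbb{C}^d$, $\mathrm{tr}^{(j)}_{\mathbb{C}^d}[T]$ denotes the partial trace over the $j$-th tensor factor, giving an operator on $\mathbb{C}^d\otimes\mathbb{C}^d$ (the remaining two factors kept in their original order). A quantum state $\rho$ on $\mathbb{C}^d\otimes\mathbb{C}^d$ is called a density source-operator state if it admits a density source-operator, i.e. a density operator $T$ on $\mathbb{C}^d\otimes\mathbb{C}^d\otimes\mathbb{C}^d$ whose partial traces over the second and over the third tensor factors both equal $\rho$. *)

theory Defs
  imports Complex_Main
begin

text \<open>Operators on (C^d)^{\<otimes>2} and (C^d)^{\<otimes>3} are represented by their matrix entries
  in the computational (product) basis; basis vectors e_{i1} \<otimes> e_{i2} (\<otimes> e_{i3}) are indexed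
  by tuples of indices in {0..<d}. Entries outside this range are irrelevant.\<close>

type_synonym op2 = "nat \<times> nat \<Rightarrow> nat \<times> nat \<Rightarrow> complex"
type_synonym op3 = "nat \<times> nat \<times> nat \<Rightarrow> nat \<times> nat \<times> nat \<Rightarrow> complex"

definition idx2 :: "nat \<Rightarrow> (nat \<times> nat) set" where
  "idx2 d = {0..<d} \<times> {0..<d}"

definition idx3 :: "nat \<Rightarrow> (nat \<times> nat \<times> nat) set" where
  "idx3 d = {0..<d} \<times> {0..<d} \<times> {0..<d}"

definition psd3 :: "nat \<Rightarrow> op3 \<Rightarrow> bool" where
  "psd3 d T \<longleftrightarrow> (\<forall>x :: nat \<times> nat \<times> nat \<Rightarrow> complex.
     let q = (\<Sum>i\<in>idx3 d. \<Sum>j\<in>idx3 d. cnj (x i) * T i j * x j) in Im q = 0 \<and> Re q \<ge> 0)"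

definition trace3 :: "nat \<Rightarrow> op3 \<Rightarrow> complex" where
  "trace3 d T = (\<Sum>i\<in>idx3 d. T i i)"

definition density_op3 :: "nat \<Rightarrow> op3 \<Rightarrow> bool" where
  "density_op3 d T \<longleftrightarrow> psd3 d T \<and> trace3 d T = 1"

definition ptrace2 :: "nat \<Rightarrow> op3 \<Rightarrow> op2" where
  "ptrace2 d T = (\<lambda>(i1, i3) (j1, j3). \<Sum>k<d. T (i1, k, i3) (j1, k, j3))"

definition ptrace3 :: "nat \<Rightarrow> op3 \<Rightarrow> op2" where
  "ptrace3 d T = (\<lambda>(i1, i2) (j1, j2). \<Sum>k<d. T (i1, i2, k) (j1, j2, k))"

definition op2_eq :: "nat \<Rightarrow> op2 \<Rightarrow> op2 \<Rightarrow> bool" where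
  "op2_eq d A B \<longleftrightarrow> (\<forall>i\<in>idx2 d. \<forall>j\<in>idx2 d. A i j = B i j)"

definition density_source_operator_state :: "nat \<Rightarrow> op2 \<Rightarrow> bool" where
  "density_source_operator_state d \<rho> \<longleftrightarrow>
     (\<exists>T. density_op3 d T \<and> op2_eq d (ptrace2 d T) \<rho> \<and> op2_eq d (ptrace3 d T) \<rho>)"

definition id2 :: op2 where
  "id2 = (\<lambda>i j. if i = j then 1 else 0)"

text \<open>Flip operator: V (e_a \<otimes> e_b) = e_b \<otimes> e_a, so <i1 i2|V|j1 j2> = [i1 = j2][i2 = j1].\<close>
definition flip :: op2 where
  "flip = (\<lambda>(i1, i2) (j1, j2). if i1 = j2 \<and> i2 = j1 then 1 else 0)"

definition P_minus :: op2 where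
  "P_minus = (\<lambda>i j. (1/2) * (id2 i j - flip i j))"

definition werner :: "nat \<Rightarrow> op2" where
  "werner d = (\<lambda>i j. (1 / of_nat d ^ 3) * id2 i j + (2 / of_nat d ^ 2) * P_minus i j)"

end

theory Submission
  imports Defs
begin

definition p12 :: "nat \<times> nat \<times> nat \<Rightarrow> nat \<times> nat \<times> nat" where
  "p12 = (\<lambda>(a,b,c). (b,a,c))"
definition p13 :: "nat \<times> nat \<times> nat \<Rightarrow> nat \<times> nat \<times> nat" where
  "p13 = (\<lambda>(a,b,c). (c,b,a))"
definition p23 :: "nat \<times> nat \<times> nat \<Rightarrow> nat \<times> nat \<times> nat" where
  "p23 = (\<lambda>(a,b,c). (a,c,b))"
definition c1 :: "nat \<times> nat \<times> nat \<Rightarrow> nat \<times> nat \<times> nat" where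
  "c1 = (\<lambda>(a,b,c). (b,c,a))"
definition c2 :: "nat \<times> nat \<times> nat \<Rightarrow> nat \<times> nat \<times> nat" where
  "c2 = (\<lambda>(a,b,c). (c,a,b))"

lemmas pdefs = p12_def p13_def p23_def c1_def c2_def

lemma reindex3:
  assumes "\<And>i. i \<in> idx3 d \<Longrightarrow> f i \<in> idx3 d" "\<And>i. i \<in> idx3 d \<Longrightarrow> g i \<in> idx3 d"
    "\<And>i. g (f i) = i" "\<And>i. f (g i) = i"
  shows "(\<Sum>i\<in>idx3 d. h (f i)) = (\<Sum>i\<in>idx3 d. (h i :: complex))"
  by (rule sum.reindex_bij_witness[of _ g f]) (use assms in auto)

lemma mem_perm:
  "i \<in> idx3 d \<Longrightarrow> p12 i \<in> idx3 d" "i \<in> idx3 d \<Longrightarrow> p13 i \<in> idx3 d"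
  "i \<in> idx3 d \<Longrightarrow> p23 i \<in> idx3 d" "i \<in> idx3 d \<Longrightarrow> c1 i \<in> idx3 d"
  "i \<in> idx3 d \<Longrightarrow> c2 i \<in> idx3 d"
  by (cases i; auto simp: pdefs idx3_def)+

lemma inv_perm:
  "p12 (p12 i) = i" "p13 (p13 i) = i" "p23 (p23 i) = i" "c1 (c2 i) = i" "c2 (c1 i) = i"
  by (cases i; auto simp: pdefs)+

definition yv :: "(nat \<times> nat \<times> nat \<Rightarrow> complex) \<Rightarrow> nat \<times> nat \<times> nat \<Rightarrow> complex" where
  "yv x i = x i - x (p12 i) - x (p13 i) - x (p23 i) + x (c1 i) + x (c2 i)"

lemma yv_perm:
  "yv x (p12 i) = - yv x i" "yv x (p13 i) = - yv x i" "yv x (p23 i) = - yv x i"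
  "yv x (c1 i) = yv x i" "yv x (c2 i) = yv x i"
  by (cases i; simp add: yv_def pdefs algebra_simps)+

lemma reidx:
  assumes "\<And>i. i \<in> idx3 d \<Longrightarrow> f i \<in> idx3 d" "\<And>i. i \<in> idx3 d \<Longrightarrow> g i \<in> idx3 d"
    "\<And>i. g (f i) = i" "\<And>i. f (g i) = i" "\<And>j. yv x (g j) = s * yv x j"
  shows "(\<Sum>i\<in>idx3 d. cnj (x (f i)) * yv x i) = s * (\<Sum>i\<in>idx3 d. cnj (x i) * yv x i)"
proof -
  have "(\<Sum>i\<in>idx3 d. cnj (x (f i)) * yv x i) = (\<Sum>i\<in>idx3 d. cnj (x (f i)) * yv x (g (f i)))"
    using assms(3) by simp
  also have "\<dots> = (\<Sum>i\<in>idx3 d. cnj (x i) * yv x (g i))"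
    by (rule reindex3[where h="\<lambda>i. cnj (x i) * yv x (g i)" and f=f and g=g]) (use assms in auto)
  also have "\<dots> = s * (\<Sum>i\<in>idx3 d. cnj (x i) * yv x i)"
    by (simp add: assms(5) sum_distrib_left algebra_simps)
  finally show ?thesis .
qed

lemma antisym_form:
  "(\<Sum>i\<in>idx3 d. cnj (x i) * yv x i) = of_real ((\<Sum>i\<in>idx3 d. (cmod (yv x i))^2) / 6)"
proof -
  have "of_real (\<Sum>i\<in>idx3 d. (cmod (yv x i))^2) = (\<Sum>i\<in>idx3 d. cnj (yv x i) * yv x i)"
    unfolding of_real_sum complex_norm_square by (simp add: mult.commute)
  also have "\<dots> = (\<Sum>i\<in>idx3 d. cnj (x i) * yv x i) - (\<Sum>i\<in>idx3 d. cnj (x (p12 i)) * yv x i)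
     - (\<Sum>i\<in>idx3 d. cnj (x (p13 i)) * yv x i) - (\<Sum>i\<in>idx3 d. cnj (x (p23 i)) * yv x i)
     + (\<Sum>i\<in>idx3 d. cnj (x (c1 i)) * yv x i) + (\<Sum>i\<in>idx3 d. cnj (x (c2 i)) * yv x i)"
    by (simp add: yv_def sum.distrib sum_subtractf algebra_simps) 
  also have "\<dots> = 6 * (\<Sum>i\<in>idx3 d. cnj (x i) * yv x i)"
    using reidx[of d p12 p12 x "-1"] reidx[of d p13 p13 x "-1"] reidx[of d p23 p23 x "-1"]
      reidx[of d c1 c2 x 1] reidx[of d c2 c1 x 1]
    by (simp add: mem_perm inv_perm yv_perm)
  finally show ?thesis by simp
qed

lemma flip_form:
  assumes "\<And>i. i \<in> idx3 d \<Longrightarrow> f i \<in> idx3 d" "\<And>i. f (f i) = i"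
  shows "(\<Sum>i\<in>idx3 d. cnj (x i) * x i) - (\<Sum>i\<in>idx3 d. cnj (x i) * x (f i))
    = of_real ((\<Sum>i\<in>idx3 d. (cmod (x i - x (f i)))^2) / 2)"
proof -
  have r1: "(\<Sum>i\<in>idx3 d. cnj (x (f i)) * x i) = (\<Sum>i\<in>idx3 d. cnj (x i) * x (f i))"
    using reindex3[where h="\<lambda>i. cnj (x i) * x (f i)" and f=f and g=f] assms by auto
  have r2: "(\<Sum>i\<in>idx3 d. cnj (x (f i)) * x (f i)) = (\<Sum>i\<in>idx3 d. cnj (x i) * x i)"
    using reindex3[where h="\<lambda>i. cnj (x i) * x i" and f=f and g=f] assms by auto
  have "of_real (\<Sum>i\<in>idx3 d. (cmod (x i - x (f i)))^2)
      = (\<Sum>i\<in>idx3 d. cnj (x i - x (f i)) * (x i - x (f i)))"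
    unfolding of_real_sum complex_norm_square by (simp add: mult.commute)
  also have "\<dots> = (\<Sum>i\<in>idx3 d. cnj (x i) * x i) - (\<Sum>i\<in>idx3 d. cnj (x i) * x (f i))
     - (\<Sum>i\<in>idx3 d. cnj (x (f i)) * x i) + (\<Sum>i\<in>idx3 d. cnj (x (f i)) * x (f i))"
    by (simp add: sum.distrib sum_subtractf algebra_simps)
  finally show ?thesis using r1 r2 by simp
qed

definition ind :: "nat \<times> nat \<times> nat \<Rightarrow> nat \<times> nat \<times> nat \<Rightarrow> complex" where
  "ind a j = (if j = a then 1 else 0)"

definition Topg :: "complex \<Rightarrow> complex \<Rightarrow> op3" where
  "Topg b g i j = b * (2 * ind i j - ind (p12 i) j - ind (p13 i) j)
     + g * (ind i j - ind (p12 i) j - ind (p13 i) j - ind (p23 i) j + ind (c1 i) j + ind (c2 i) j)"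

lemma s1: "(a::nat) < d \<Longrightarrow> (\<Sum>k<d. if a = k \<and> k = a then (1::complex) else 0) = 1"
proof -
  assume "a < d"
  have "(\<Sum>k<d. if a = k \<and> k = a then (1::complex) else 0) = (\<Sum>k<d. if k = a then 1 else 0)"
    by (rule sum.cong) auto
  also have "\<dots> = 1" using \<open>a < d\<close> sum.delta[of "{..<d}" a "\<lambda>_. 1::complex"] by simp
  finally show ?thesis .
qed

lemma s1': "(a::nat) < d \<Longrightarrow> (\<Sum>k<d. if k = a \<and> a = k then (1::complex) else 0) = 1"
  using s1[of a d] by (simp add: eq_commute conj_commute)

lemma t3_0: "i1 < d \<Longrightarrow> i2 < d \<Longrightarrow> (\<Sum>k<d. ind ((i1,i2,k)) (j1,j2,k)) = of_nat d * (if j1=i1 \<and> j2=i2 then 1 else 0)"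
  by (cases "j1=i1 \<and> j2=i2") (auto simp: ind_def pdefs s1 s1' intro!: sum.neutral)

lemma t3_1: "i1 < d \<Longrightarrow> i2 < d \<Longrightarrow> (\<Sum>k<d. ind (p12 (i1,i2,k)) (j1,j2,k)) = of_nat d * (if j1=i2 \<and> j2=i1 then 1 else 0)"
  by (cases "j1=i2 \<and> j2=i1") (auto simp: ind_def pdefs s1 s1' intro!: sum.neutral)

lemma t3_2: "i1 < d \<Longrightarrow> i2 < d \<Longrightarrow> (\<Sum>k<d. ind (p13 (i1,i2,k)) (j1,j2,k)) = (if j1=i1 \<and> j2=i2 then 1 else 0)"
  by (cases "j1=i1 \<and> j2=i2") (auto simp: ind_def pdefs s1 s1' intro!: sum.neutral)

lemma t3_3: "i1 < d \<Longrightarrow> i2 < d \<Longrightarrow> (\<Sum>k<d. ind (p23 (i1,i2,k)) (j1,j2,k)) = (if j1=i1 \<and> j2=i2 then 1 else 0)"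
  by (cases "j1=i1 \<and> j2=i2") (auto simp: ind_def pdefs s1 s1' intro!: sum.neutral)

lemma t3_4: "i1 < d \<Longrightarrow> i2 < d \<Longrightarrow> (\<Sum>k<d. ind (c1 (i1,i2,k)) (j1,j2,k)) = (if j1=i2 \<and> j2=i1 then 1 else 0)"
  by (cases "j1=i2 \<and> j2=i1") (auto simp: ind_def pdefs s1 s1' intro!: sum.neutral)

lemma t3_5: "i1 < d \<Longrightarrow> i2 < d \<Longrightarrow> (\<Sum>k<d. ind (c2 (i1,i2,k)) (j1,j2,k)) = (if j1=i2 \<and> j2=i1 then 1 else 0)"
  by (cases "j1=i2 \<and> j2=i1") (auto simp: ind_def pdefs s1 s1' intro!: sum.neutral)

lemma t2_0: "i1 < d \<Longrightarrow> i3 < d \<Longrightarrow> (\<Sum>k<d. ind ((i1,k,i3)) (j1,k,j3)) = of_nat d * (if j1=i1 \<and> j3=i3 then 1 else 0)"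
  by (cases "j1=i1 \<and> j3=i3") (auto simp: ind_def pdefs s1 s1' intro!: sum.neutral)

lemma t2_1: "i1 < d \<Longrightarrow> i3 < d \<Longrightarrow> (\<Sum>k<d. ind (p12 (i1,k,i3)) (j1,k,j3)) = (if j1=i1 \<and> j3=i3 then 1 else 0)"
  by (cases "j1=i1 \<and> j3=i3") (auto simp: ind_def pdefs s1 s1' intro!: sum.neutral)

lemma t2_2: "i1 < d \<Longrightarrow> i3 < d \<Longrightarrow> (\<Sum>k<d. ind (p13 (i1,k,i3)) (j1,k,j3)) = of_nat d * (if j1=i3 \<and> j3=i1 then 1 else 0)"
  by (cases "j1=i3 \<and> j3=i1") (auto simp: ind_def pdefs s1 s1' intro!: sum.neutral)

lemma t2_3: "i1 < d \<Longrightarrow> i3 < d \<Longrightarrow> (\<Sum>k<d. ind (p23 (i1,k,i3)) (j1,k,j3)) = (if j1=i1 \<and> j3=i3 then 1 else 0)"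
  by (cases "j1=i1 \<and> j3=i3") (auto simp: ind_def pdefs s1 s1' intro!: sum.neutral)

lemma t2_4: "i1 < d \<Longrightarrow> i3 < d \<Longrightarrow> (\<Sum>k<d. ind (c1 (i1,k,i3)) (j1,k,j3)) = (if j1=i3 \<and> j3=i1 then 1 else 0)"
  by (cases "j1=i3 \<and> j3=i1") (auto simp: ind_def pdefs s1 s1' intro!: sum.neutral)

lemma t2_5: "i1 < d \<Longrightarrow> i3 < d \<Longrightarrow> (\<Sum>k<d. ind (c2 (i1,k,i3)) (j1,k,j3)) = (if j1=i3 \<and> j3=i1 then 1 else 0)"
  by (cases "j1=i3 \<and> j3=i1") (auto simp: ind_def pdefs s1 s1' intro!: sum.neutral)

lemma ptr3_sum: "(\<Sum>k<d. Topg b g (i1,i2,k) (j1,j2,k)) =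
   b * (2 * (\<Sum>k<d. ind (i1,i2,k) (j1,j2,k)) - (\<Sum>k<d. ind (p12 (i1,i2,k)) (j1,j2,k)) - (\<Sum>k<d. ind (p13 (i1,i2,k)) (j1,j2,k)))
  + g * ((\<Sum>k<d. ind (i1,i2,k) (j1,j2,k)) - (\<Sum>k<d. ind (p12 (i1,i2,k)) (j1,j2,k)) - (\<Sum>k<d. ind (p13 (i1,i2,k)) (j1,j2,k))
     - (\<Sum>k<d. ind (p23 (i1,i2,k)) (j1,j2,k)) + (\<Sum>k<d. ind (c1 (i1,i2,k)) (j1,j2,k)) + (\<Sum>k<d. ind (c2 (i1,i2,k)) (j1,j2,k)))"
  unfolding Topg_def by (simp add: sum.distrib sum_subtractf sum_distrib_left right_diff_distrib distrib_left)

lemma ptr2_sum: "(\<Sum>k<d. Topg b g (i1,k,i3) (j1,k,j3)) =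
   b * (2 * (\<Sum>k<d. ind (i1,k,i3) (j1,k,j3)) - (\<Sum>k<d. ind (p12 (i1,k,i3)) (j1,k,j3)) - (\<Sum>k<d. ind (p13 (i1,k,i3)) (j1,k,j3)))
  + g * ((\<Sum>k<d. ind (i1,k,i3) (j1,k,j3)) - (\<Sum>k<d. ind (p12 (i1,k,i3)) (j1,k,j3)) - (\<Sum>k<d. ind (p13 (i1,k,i3)) (j1,k,j3))
     - (\<Sum>k<d. ind (p23 (i1,k,i3)) (j1,k,j3)) + (\<Sum>k<d. ind (c1 (i1,k,i3)) (j1,k,j3)) + (\<Sum>k<d. ind (c2 (i1,k,i3)) (j1,k,j3)))"
  unfolding Topg_def by (simp add: sum.distrib sum_subtractf sum_distrib_left right_diff_distrib distrib_left)

abbreviation bb :: "nat \<Rightarrow> complex" where "bb d \<equiv> 1 / (of_nat d ^ 3 * (of_nat d - 1))"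
abbreviation gg :: "nat \<Rightarrow> complex" where "gg d \<equiv> 1 / (of_nat d ^ 2 * (of_nat d - 1))"

lemma arith_c:
  fixes x :: complex assumes h: "x \<noteq> 0" "x - 1 \<noteq> 0"
  shows "1 / (x ^ 3 * (x - 1)) * (2 * x - 1) + 1 / (x ^ 2 * (x - 1)) * (x - 2) = (x + 1) / x ^ 3"
    "1 / (x ^ 3 * (x - 1)) * (x - 1) = 1 / x ^ 3"
    "1 / (x ^ 3 * (x - 1)) * x + 1 / (x ^ 2 * (x - 1)) * (x - 2) = 1 / x ^ 2"
proof -
  have e: "x ^ 3 = x * x ^ 2" by (simp add: power3_eq_cube power2_eq_square)
  show "1 / (x ^ 3 * (x - 1)) * (2 * x - 1) + 1 / (x ^ 2 * (x - 1)) * (x - 2) = (x + 1) / x ^ 3"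
    using h unfolding e by (simp add: divide_simps) (simp add: algebra_simps power2_eq_square)
  show "1 / (x ^ 3 * (x - 1)) * (x - 1) = 1 / x ^ 3" using h by simp
  show "1 / (x ^ 3 * (x - 1)) * x + 1 / (x ^ 2 * (x - 1)) * (x - 2) = 1 / x ^ 2"
    using h unfolding e by (simp add: divide_simps)
qed

lemma arith_key:
  fixes x :: complex assumes h: "x \<noteq> 0" "x - 1 \<noteq> 0"
  shows "1 / (x ^ 3 * (x - 1)) * (2 * (x * (if A then 1 else 0)) - x * (if B then 1 else 0) - (if A then 1 else 0))
    + 1 / (x ^ 2 * (x - 1)) * (x * (if A then 1 else 0) - x * (if B then 1 else 0) - (if A then 1 else 0)
       - (if A then 1 else 0) + (if B then 1 else 0) + (if B then 1 else 0))
   = (1 / x ^ 3) * (if A then 1 else 0) + (2 / x ^ 2) * ((1/2) * ((if A then 1 else 0) - (if B then 1 else 0)))"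
proof (cases A; cases B)
  assume "A" "B" then show ?thesis using arith_c(2)[OF h] by simp
next
  assume "A" "\<not>B"
  have "1 / (x ^ 3 * (x - 1)) * (2 * x - 1) + 1 / (x ^ 2 * (x - 1)) * (x - 2) = (x + 1) / x ^ 3"
    by (rule arith_c(1)[OF h])
  moreover have "(x+1)/x^3 = 1 / x ^ 3 + 2 / x\<^sup>2 * (1/2)" using h
    by (simp add: divide_simps) (simp add: numeral_eq_Suc algebra_simps)
  ultimately show ?thesis using \<open>A\<close> \<open>\<not>B\<close> by (simp add: algebra_simps)
next
  assume "\<not>A" "B"
  have "1 / (x ^ 3 * (x - 1)) * x + 1 / (x ^ 2 * (x - 1)) * (x - 2) = 1 / x ^ 2"
    by (rule arith_c(3)[OF h])
  show ?thesis using \<open>\<not>A\<close> \<open>B\<close> h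
    by (simp add: divide_simps) (simp add: numeral_eq_Suc algebra_simps)
next
  assume "\<not>A" "\<not>B" then show ?thesis by simp
qed

lemma werner_eq:
  "werner d (i1,i2) (j1,j2) = (1 / of_nat d ^ 3) * (if j1=i1 \<and> j2=i2 then 1 else 0)
     + (2 / of_nat d ^ 2) * ((1/2) * ((if j1=i1 \<and> j2=i2 then 1 else 0) - (if j1=i2 \<and> j2=i1 then 1 else 0)))"
proof -
  have a: "id2 (i1,i2) (j1,j2) = (if j1=i1 \<and> j2=i2 then 1 else 0)" by (auto simp: id2_def)
  have b: "flip (i1,i2) (j1,j2) = (if j1=i2 \<and> j2=i1 then 1 else 0)" by (auto simp: flip_def)
  show ?thesis unfolding werner_def P_minus_def a b by (rule refl)
qed

lemma ptr3:
  assumes "d \<ge> 2" "i1 < d" "i2 < d"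
  shows "ptrace3 d (Topg (bb d) (gg d)) (i1,i2) (j1,j2) = werner d (i1,i2) (j1,j2)"
proof -
  have h: "(of_nat d :: complex) \<noteq> 0" "(of_nat d :: complex) - 1 \<noteq> 0" using assms by auto
  have "ptrace3 d (Topg (bb d) (gg d)) (i1,i2) (j1,j2) = (\<Sum>k<d. Topg (bb d) (gg d) (i1,i2,k) (j1,j2,k))"
    by (simp add: ptrace3_def)
  also have "\<dots> = werner d (i1,i2) (j1,j2)"
    unfolding ptr3_sum werner_eq using assms(2,3)
    apply (simp only: t3_0 t3_1 t3_2 t3_3 t3_4 t3_5)
    by (rule arith_key[OF h])
  finally show ?thesis .
qed

lemma r1: "2 * ((x::complex) * a) - a - x * b = 2 * (x * a) - x * b - a" by (simp add: algebra_simps)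
lemma r2: "(x::complex) * a - a - x * b - a + b + b = x * a - x * b - a - a + b + b" by (simp add: algebra_simps)

lemma ptr2:
  assumes "d \<ge> 2" "i1 < d" "i3 < d"
  shows "ptrace2 d (Topg (bb d) (gg d)) (i1,i3) (j1,j3) = werner d (i1,i3) (j1,j3)"
proof -
  have h: "(of_nat d :: complex) \<noteq> 0" "(of_nat d :: complex) - 1 \<noteq> 0" using assms by auto
  have "ptrace2 d (Topg (bb d) (gg d)) (i1,i3) (j1,j3) = (\<Sum>k<d. Topg (bb d) (gg d) (i1,k,i3) (j1,k,j3))"
    by (simp add: ptrace2_def)
  also have "\<dots> = werner d (i1,i3) (j1,j3)"
    unfolding ptr2_sum werner_eq using assms(2,3)
    apply (simp only: t2_0 t2_1 t2_2 t2_3 t2_4 t2_5)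
    apply (subst r1, subst r2)
    by (rule arith_key[OF h])
  finally show ?thesis .
qed

lemma ind_sum: "a \<in> idx3 d \<Longrightarrow> (\<Sum>j\<in>idx3 d. ind a j * x j) = x a"
proof -
  assume a: "a \<in> idx3 d"
  have "(\<Sum>j\<in>idx3 d. ind a j * x j) = (\<Sum>j\<in>idx3 d. if j = a then x j else 0)"
    by (rule sum.cong) (auto simp: ind_def)
  also have "\<dots> = x a" using a by (simp add: idx3_def)
  finally show ?thesis .
qed

lemma row:
  assumes "i \<in> idx3 d"
  shows "(\<Sum>j\<in>idx3 d. Topg b g i j * x j) = b * (2 * x i - x (p12 i) - x (p13 i)) + g * yv x i"
proof -
  have "(\<Sum>j\<in>idx3 d. Topg b g i j * x j) = (\<Sum>j\<in>idx3 d.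
     b * (2 * (ind i j * x j) - ind (p12 i) j * x j - ind (p13 i) j * x j)
     + g * (ind i j * x j - ind (p12 i) j * x j - ind (p13 i) j * x j - ind (p23 i) j * x j
        + ind (c1 i) j * x j + ind (c2 i) j * x j))"
    by (rule sum.cong) (auto simp: Topg_def algebra_simps)
  also have "\<dots> = b * (2 * (\<Sum>j\<in>idx3 d. ind i j * x j) - (\<Sum>j\<in>idx3 d. ind (p12 i) j * x j) - (\<Sum>j\<in>idx3 d. ind (p13 i) j * x j))
     + g * ((\<Sum>j\<in>idx3 d. ind i j * x j) - (\<Sum>j\<in>idx3 d. ind (p12 i) j * x j) - (\<Sum>j\<in>idx3 d. ind (p13 i) j * x j)
      - (\<Sum>j\<in>idx3 d. ind (p23 i) j * x j) + (\<Sum>j\<in>idx3 d. ind (c1 i) j * x j) + (\<Sum>j\<in>idx3 d. ind (c2 i) j * x j))"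
    by (simp add: sum.distrib sum_subtractf sum_distrib_left right_diff_distrib distrib_left)
  also have "\<dots> = b * (2 * x i - x (p12 i) - x (p13 i)) + g * yv x i"
    using assms by (simp add: ind_sum mem_perm yv_def)
  finally show ?thesis .
qed

lemma psd_T:
  assumes "b \<ge> 0" "g \<ge> 0"
  shows "psd3 d (Topg (of_real b) (of_real g))"
  unfolding psd3_def Let_def
proof (intro allI)
  fix x :: "nat \<times> nat \<times> nat \<Rightarrow> complex"
  let ?N = "\<Sum>i\<in>idx3 d. cnj (x i) * x i"
  have "(\<Sum>i\<in>idx3 d. \<Sum>j\<in>idx3 d. cnj (x i) * Topg (of_real b) (of_real g) i j * x j)
     = (\<Sum>i\<in>idx3 d. cnj (x i) * (of_real b * (2 * x i - x (p12 i) - x (p13 i)) + of_real g * yv x i))"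
  proof (rule sum.cong)
    fix i assume i: "i \<in> idx3 d"
    have "(\<Sum>j\<in>idx3 d. cnj (x i) * Topg (of_real b) (of_real g) i j * x j)
       = cnj (x i) * (\<Sum>j\<in>idx3 d. Topg (of_real b) (of_real g) i j * x j)"
      by (simp add: sum_distrib_left mult.assoc)
    then show "(\<Sum>j\<in>idx3 d. cnj (x i) * Topg (of_real b) (of_real g) i j * x j) =
       cnj (x i) * (of_real b * (2 * x i - x (p12 i) - x (p13 i)) + of_real g * yv x i)"
      using row[OF i] by simp
  qed simp
  also have "\<dots> = of_real b * ((?N - (\<Sum>i\<in>idx3 d. cnj (x i) * x (p12 i)))
      + (?N - (\<Sum>i\<in>idx3 d. cnj (x i) * x (p13 i))))
      + of_real g * (\<Sum>i\<in>idx3 d. cnj (x i) * yv x i)"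
    by (simp add: sum.distrib sum_subtractf sum_distrib_left algebra_simps)
  also have "\<dots> = of_real (b * ((\<Sum>i\<in>idx3 d. (cmod (x i - x (p12 i)))^2) / 2
      + (\<Sum>i\<in>idx3 d. (cmod (x i - x (p13 i)))^2) / 2)
      + g * ((\<Sum>i\<in>idx3 d. (cmod (yv x i))^2) / 6))"
  proof -
    have f12: "?N - (\<Sum>i\<in>idx3 d. cnj (x i) * x (p12 i)) = of_real ((\<Sum>i\<in>idx3 d. (cmod (x i - x (p12 i)))^2) / 2)"
      by (rule flip_form) (auto simp: mem_perm inv_perm)
    have f13: "?N - (\<Sum>i\<in>idx3 d. cnj (x i) * x (p13 i)) = of_real ((\<Sum>i\<in>idx3 d. (cmod (x i - x (p13 i)))^2) / 2)"
      by (rule flip_form) (auto simp: mem_perm inv_perm)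
    show ?thesis unfolding f12 f13 antisym_form by simp
  qed
  finally have e: "(\<Sum>i\<in>idx3 d. \<Sum>j\<in>idx3 d. cnj (x i) * Topg (of_real b) (of_real g) i j * x j) = of_real (b * ((\<Sum>i\<in>idx3 d. (cmod (x i - x (p12 i)))^2) / 2
      + (\<Sum>i\<in>idx3 d. (cmod (x i - x (p13 i)))^2) / 2)
      + g * ((\<Sum>i\<in>idx3 d. (cmod (yv x i))^2) / 6))" .
  show "Im (\<Sum>i\<in>idx3 d. \<Sum>j\<in>idx3 d. cnj (x i) * Topg (of_real b) (of_real g) i j * x j) = 0 \<and>
        0 \<le> Re (\<Sum>i\<in>idx3 d. \<Sum>j\<in>idx3 d. cnj (x i) * Topg (of_real b) (of_real g) i j * x j)"
    unfolding e using assms by (simp add: sum_nonneg)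
qed

lemma trace_ptr: "trace3 d T = (\<Sum>i1<d. \<Sum>i2<d. ptrace3 d T (i1,i2) (i1,i2))"
  unfolding trace3_def idx3_def ptrace3_def
  by (simp add: atLeast0LessThan sum.cartesian_product split_def)

lemma werner_trace:
  assumes "d \<ge> 2"
  shows "(\<Sum>i1<d. \<Sum>i2<d. werner d (i1,i2) (i1,i2)) = 1"
proof -
  have h: "(of_nat d :: complex) \<noteq> 0" using assms by auto
  have inner: "(\<Sum>i2<d. werner d (i1,i2) (i1,i2)) = of_nat d / of_nat d ^ 3 + (of_nat d - 1) / of_nat d ^ 2"
    if "i1 < d" for i1
  proof -
    have "(\<Sum>i2<d. werner d (i1,i2) (i1,i2)) = (\<Sum>i2<d. (1 / of_nat d ^ 3 + 1 / of_nat d ^ 2) - (if i2 = i1 then 1 / of_nat d ^ 2 else 0))"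
      by (rule sum.cong) (auto simp: werner_eq)
    also have "\<dots> = of_nat d * (1 / of_nat d ^ 3 + 1 / of_nat d ^ 2) - 1 / of_nat d ^ 2"
      using that by (simp add: sum_subtractf)
    also have "\<dots> = of_nat d / of_nat d ^ 3 + (of_nat d - 1) / of_nat d ^ 2"
      using h by (simp add: divide_simps; simp add: numeral_eq_Suc algebra_simps)
    finally show ?thesis .
  qed
  have "(\<Sum>i1<d. \<Sum>i2<d. werner d (i1,i2) (i1,i2)) = of_nat d * (of_nat d / of_nat d ^ 3 + (of_nat d - 1) / of_nat d ^ 2)"
    using inner by simp
  also have "\<dots> = 1" using h
    by (simp add: divide_simps) (simp add: numeral_eq_Suc algebra_simps)
  finally show ?thesis .
qed

theorem proposition1:
  fixes d :: nat
  assumes "d \<ge> 2"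
  shows "density_source_operator_state d (werner d)"
proof -
  let ?T = "Topg (bb d) (gg d)"
  have eqT: "?T = Topg (of_real (1 / (real d ^ 3 * (real d - 1)))) (of_real (1 / (real d ^ 2 * (real d - 1))))"
    by simp
  have psd: "psd3 d ?T" unfolding eqT
    by (rule psd_T) (use assms in auto)
  have tr: "trace3 d ?T = 1"
    unfolding trace_ptr using ptr3[OF assms] werner_trace[OF assms] by simp
  have p3: "op2_eq d (ptrace3 d ?T) (werner d)"
    unfolding op2_eq_def idx2_def using ptr3[OF assms] by auto
  have p2: "op2_eq d (ptrace2 d ?T) (werner d)"
    unfolding op2_eq_def idx2_def using ptr2[OF assms] by auto
  show ?thesis unfolding density_source_operator_state_def density_op3_def
    using psd tr p2 p3 by blast
qed

end
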